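(* Let $n \ge 2$ and let $K, L$ be compact convex subsets of $\mathbb{R}^n$ such that, for every unit vector $u$, the projection $L_u$ contains a translate of $K_u$. Then $$V_n(K) \le \left(\tfrac{n}{n-1}\right)^n V_n(L).$$
   Context: For a set $S \subseteq \mathbb{R}^n$ and a unit vector $u$, $S_u$ denotes the orthogonal projection of $S$ onto $u^\perp$. "$A$ contains a translate of $B$" means $B+w\subseteq A$ for some vector $w$. $V_n$ is $n$-dimensional volume. *)

theory Defs
  imports "HOL-Analysis.Analysis"
begin

definition proj_perp :: "'a::euclidean_space \<Rightarrow> 'a set \<Rightarrow> 'a set" where
  "proj_perp u S = (\<lambda>x. x - (x \<bullet> u) *\<^sub>R u) ` S"

end

theory Submission
  imports Defs
begin

lemma exists_orth_unit:
  fixes z :: "'b \<Rightarrow> 'a::euclidean_space"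
  assumes "finite J" "card J \<le> DIM('a)" "(\<Sum>i\<in>J. z i) = 0"
  shows "\<exists>u. norm u = 1 \<and> (\<forall>i\<in>J. z i \<bullet> u = 0)"
proof (cases "J = {}")
  case True
  obtain b :: 'a where "b \<in> Basis" using nonempty_Basis by blast
  then show ?thesis using True norm_Basis by blast
next
  case False
  then obtain j where j: "j \<in> J" by blast
  have zj: "z j = - (\<Sum>i\<in>J-{j}. z i)"
    using assms(1,3) j by (simp add: sum_diff1 eq_neg_iff_add_eq_0)
  have sub: "z ` J \<subseteq> span (z ` (J - {j}))"
  proof
    fix v assume "v \<in> z ` J"
    then obtain i where i: "i \<in> J" "v = z i" by blast
    show "v \<in> span (z ` (J - {j}))"
    proof (cases "i = j")
      case True
      have "(\<Sum>i\<in>J-{j}. z i) \<in> span (z ` (J - {j}))"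
        by (intro span_sum) (auto intro: span_base)
      then show ?thesis using True i zj by (simp add: span_neg)
    next
      case False
      then show ?thesis using i by (auto intro: span_base)
    qed
  qed
  have "dim (z ` J) \<le> card (z ` (J - {j}))"
    using sub assms(1) by (intro dim_le_card) auto
  also have "\<dots> \<le> card (J - {j})" using assms(1) by (intro card_image_le) auto
  also have "\<dots> < DIM('a)" using assms(1,2) j card_gt_0_iff[of J] DIM_positive[where 'a='a] by (auto simp add: card_Diff_singleton)
  finally obtain x :: 'a where x: "x \<noteq> 0" "\<And>y. y \<in> span (z ` J) \<Longrightarrow> orthogonal x y"
    by (rule orthogonal_to_subspace_exists) blast
  have "\<forall>i\<in>J. z i \<bullet> (x /\<^sub>R norm x) = 0"
    using x(2) by (metis (no_types, lifting) orthogonal_def span_base imageI inner_commute inner_scaleR_right mult_zero_right)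
  moreover have "norm (x /\<^sub>R norm x) = 1" using x(1) by simp
  ultimately show ?thesis by blast
qed

lemma hyp_cons:
  fixes K L :: "'a::euclidean_space set"
  assumes "\<exists>w. (\<lambda>x. x + w) ` proj_perp u K \<subseteq> proj_perp u L"
  shows "\<exists>w. \<forall>k\<in>K. \<exists>y\<in>L. \<forall>z. z \<bullet> u = 0 \<longrightarrow> z \<bullet> k + z \<bullet> w = z \<bullet> y"
proof -
  obtain w where w: "(\<lambda>x. x + w) ` proj_perp u K \<subseteq> proj_perp u L" using assms by blast
  have "\<exists>y\<in>L. \<forall>z. z \<bullet> u = 0 \<longrightarrow> z \<bullet> k + z \<bullet> w = z \<bullet> y" if "k \<in> K" for k
  proof -
    have "k - (k \<bullet> u) *\<^sub>R u + w \<in> proj_perp u L"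
      using w that unfolding proj_perp_def by blast
    then obtain y where y: "y \<in> L" "k - (k \<bullet> u) *\<^sub>R u + w = y - (y \<bullet> u) *\<^sub>R u"
      unfolding proj_perp_def by blast
    have "z \<bullet> k + z \<bullet> w = z \<bullet> y" if "z \<bullet> u = 0" for z
    proof -
      have "z \<bullet> (k - (k \<bullet> u) *\<^sub>R u + w) = z \<bullet> (y - (y \<bullet> u) *\<^sub>R u)" using y(2) by simp
      then show ?thesis using that by (simp add: inner_diff_right inner_add_right)
    qed
    then show ?thesis using y(1) by blast
  qed
  then show ?thesis by blast
qed

lemma core:
  fixes K L :: "'a::euclidean_space set" and k :: "'b \<Rightarrow> 'a"
  assumes n2: "DIM('a) \<ge> 2" and L: "compact L" "convex L" "L \<noteq> {}"
    and H: "\<And>u. norm u = 1 \<Longrightarrow> \<exists>w. \<forall>k\<in>K. \<exists>y\<in>L. \<forall>z. z \<bullet> u = 0 \<longrightarrow> z \<bullet> k + z \<bullet> w = z \<bullet> y"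
    and I: "finite I" "I \<noteq> {}" "card I \<le> DIM('a) + 1"
    and kK: "\<And>i. i \<in> I \<Longrightarrow> k i \<in> K"
  shows "\<exists>x. \<forall>i\<in>I. \<exists>y\<in>L. k i = x + (real DIM('a) / (real DIM('a) - 1)) *\<^sub>R y"
proof -
  define n where "n = real DIM('a)"
  define lam where "lam = n / (n - 1)"
  have n2': "n \<ge> 2" using n2 unfolding n_def by simp
  have lam0: "lam > 0" and lam1: "lam \<ge> 1" using n2' unfolding lam_def by (auto simp: field_simps)
  define m where "m = real (card I)"
  have m0: "m > 0" using I unfolding m_def by (simp add: card_gt_0_iff)
  have clL: "closed L" using L(1) compact_imp_closed by blast
  define c where "c = (1/m) *\<^sub>R (\<Sum>i\<in>I. k i)"
  define P where "P i x = closest_point L ((1/lam) *\<^sub>R (k i - x))" for i x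
  define T where "T x = c - lam *\<^sub>R ((\<Sum>i\<in>I. (1/m) *\<^sub>R P i x))" for x
  define S where "S = (\<lambda>y. c - lam *\<^sub>R y) ` L"
  have PL: "P i x \<in> L" for i x unfolding P_def using closest_point_in_set[OF clL L(3)] .
  have cS: "compact S" unfolding S_def using L(1)
    by (intro compact_continuous_image) (auto intro!: continuous_intros)
  have cvS: "convex S" unfolding S_def using L(2)
    using convex_affinity[OF L(2), of c "-lam"] by simp
  have neS: "S \<noteq> {}" using L(3) unfolding S_def by simp
  have contP: "continuous_on UNIV (P i)" for i
  proof -
    have "continuous_on UNIV ((closest_point L) \<circ> (\<lambda>x. (1/lam) *\<^sub>R (k i - x)))"
      by (intro continuous_on_compose continuous_intros continuous_on_closest_point L(2,3) clL)
    then show ?thesis unfolding P_def o_def .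
  qed
  have contT: "continuous_on S T"
    unfolding T_def using contP
    by (intro continuous_intros) (auto intro: continuous_on_subset)
  have TS: "T \<in> S \<rightarrow> S"
  proof
    fix x assume "x \<in> S"
    have "(\<Sum>i\<in>I. (1/m) *\<^sub>R P i x) \<in> L"
      using I(1) L(2) PL m0 by (intro convex_sum) (auto simp: m_def)
    then show "T x \<in> S" unfolding T_def S_def by blast
  qed
  obtain x where "x \<in> S" and fx: "T x = x" using brouwer[OF cS cvS neS contT TS] by blast
  define y where "y i = P i x" for i
  define r where "r i = k i - x - lam *\<^sub>R y i" for i
  have yL: "y i \<in> L" for i unfolding y_def using PL .
  have sumr: "(\<Sum>i\<in>I. r i) = 0"
  proof -
    have "m *\<^sub>R x = m *\<^sub>R c - lam *\<^sub>R (\<Sum>i\<in>I. y i)"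
      using fx m0 unfolding T_def y_def
      by (simp add: scaleR_sum_right[symmetric] algebra_simps)
    moreover have "m *\<^sub>R c = (\<Sum>i\<in>I. k i)" using m0 unfolding c_def by simp
    moreover have "(\<Sum>i\<in>I. r i) = (\<Sum>i\<in>I. k i) - m *\<^sub>R x - lam *\<^sub>R (\<Sum>i\<in>I. y i)"
      unfolding r_def by (simp add: sum_subtractf scaleR_sum_right sum_constant_scaleR m_def)
    ultimately show ?thesis by (simp add: algebra_simps)
  qed
  have opt: "r i \<bullet> y' \<le> r i \<bullet> y i" if "y' \<in> L" for i y'
  proof -
    have "((1/lam) *\<^sub>R (k i - x) - y i) \<bullet> (y' - y i) \<le> 0"
      unfolding y_def P_def using closest_point_dot[OF L(2) clL that] .
    moreover have "r i = lam *\<^sub>R ((1/lam) *\<^sub>R (k i - x) - y i)"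
      unfolding r_def using lam0 by (simp add: algebra_simps)
    ultimately have "r i \<bullet> (y' - y i) \<le> 0"
      using lam0 by (simp add: mult_nonpos_nonneg mult_le_0_iff)
    then show ?thesis by (simp add: inner_diff_right)
  qed
  define A where "A = (\<Sum>i\<in>I. r i \<bullet> k i)"
  define Y where "Y = (\<Sum>i\<in>I. r i \<bullet> y i)"
  have key: "A \<le> lam * Y"
  proof (cases "card I \<le> DIM('a)")
    case True
    obtain u where u: "norm u = 1" "\<forall>i\<in>I. r i \<bullet> u = 0"
      using exists_orth_unit[OF I(1) True sumr] by blast
    obtain w where w: "\<forall>k\<in>K. \<exists>y\<in>L. \<forall>z. z \<bullet> u = 0 \<longrightarrow> z \<bullet> k + z \<bullet> w = z \<bullet> y"
      using H[OF u(1)] by blast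
    have "r i \<bullet> k i + r i \<bullet> w \<le> r i \<bullet> y i" if hi: "i \<in> I" for i
    proof -
      obtain y' where y': "y' \<in> L" "\<forall>z. z \<bullet> u = 0 \<longrightarrow> z \<bullet> k i + z \<bullet> w = z \<bullet> y'"
        using w kK[OF hi] by blast
      then have "r i \<bullet> k i + r i \<bullet> w = r i \<bullet> y'" using u(2) hi by blast
      then show ?thesis using opt[OF y'(1), of i] by simp
    qed
    then have "(\<Sum>i\<in>I. r i \<bullet> k i + r i \<bullet> w) \<le> Y" unfolding Y_def by (rule sum_mono)
    then have "A + (\<Sum>i\<in>I. r i) \<bullet> w \<le> Y" by (simp add: sum.distrib inner_sum_left A_def)
    then have AY: "A \<le> Y" using sumr by simp
    obtain y0 where y0: "y0 \<in> L" using L(3) by blast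
    have "(\<Sum>i\<in>I. r i \<bullet> y0) \<le> Y" unfolding Y_def using opt[OF y0] by (rule sum_mono)
    then have "0 \<le> Y" using sumr by (simp add: inner_sum_left[symmetric])
    then have "Y \<le> lam * Y" using lam1 by (simp add: mult_le_cancel_right1)
    then show ?thesis using AY by linarith
  next
    case False
    then have cI: "card I = DIM('a) + 1" using I(3) by simp
    have B: "(\<Sum>i\<in>I-{j}. (r i + (1/n) *\<^sub>R r j) \<bullet> k i) \<le> Y" if j: "j \<in> I" for j
    proof -
      define z where "z i = r i + (1/n) *\<^sub>R r j" for i
      have cJ: "card (I - {j}) = DIM('a)" using cI j I(1) by simp
      have srj: "(\<Sum>i\<in>I-{j}. r i) = - r j" using sumr I(1) j by (simp add: sum_diff1)
      have "(\<Sum>i\<in>I-{j}. z i) = (\<Sum>i\<in>I-{j}. r i) + (real (card (I-{j})) * (1/n)) *\<^sub>R r j"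
        by (simp add: z_def sum.distrib sum_constant_scaleR)
      also have "\<dots> = (\<Sum>i\<in>I-{j}. r i) + r j" using cJ n2' by (simp add: n_def)
      also have "\<dots> = 0" using srj by simp
      finally have sz: "(\<Sum>i\<in>I-{j}. z i) = 0" .
      obtain u where u: "norm u = 1" "\<forall>i\<in>I-{j}. z i \<bullet> u = 0"
        using exists_orth_unit[of "I-{j}" z] I(1) cJ sz by auto
      obtain w where w: "\<forall>k\<in>K. \<exists>y\<in>L. \<forall>z. z \<bullet> u = 0 \<longrightarrow> z \<bullet> k + z \<bullet> w = z \<bullet> y"
        using H[OF u(1)] by blast
      have le: "z i \<bullet> k i + z i \<bullet> w \<le> r i \<bullet> y i + (1/n) * (r j \<bullet> y j)" if hi: "i \<in> I-{j}" for i
      proof -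
        obtain y' where y': "y' \<in> L" "\<forall>z. z \<bullet> u = 0 \<longrightarrow> z \<bullet> k i + z \<bullet> w = z \<bullet> y'"
          using w kK[of i] hi by blast
        then have e: "z i \<bullet> k i + z i \<bullet> w = z i \<bullet> y'" using u(2) hi by blast
        have "z i \<bullet> y' = r i \<bullet> y' + (1/n) * (r j \<bullet> y')" by (simp add: z_def inner_add_left)
        moreover have "r i \<bullet> y' \<le> r i \<bullet> y i" "r j \<bullet> y' \<le> r j \<bullet> y j" using opt[OF y'(1)] by auto
        moreover have "(1/n) * (r j \<bullet> y') \<le> (1/n) * (r j \<bullet> y j)"
          using calculation(3) n2' by (intro mult_left_mono) auto
        ultimately show ?thesis using e by linarith
      qed
      have "(\<Sum>i\<in>I-{j}. z i \<bullet> k i + z i \<bullet> w) \<le> (\<Sum>i\<in>I-{j}. r i \<bullet> y i + (1/n) * (r j \<bullet> y j))"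
        using le by (rule sum_mono)
      also have "\<dots> = (\<Sum>i\<in>I-{j}. r i \<bullet> y i) + real (card (I-{j})) * ((1/n) * (r j \<bullet> y j))"
        by (simp add: sum.distrib)
      also have "\<dots> = (\<Sum>i\<in>I-{j}. r i \<bullet> y i) + r j \<bullet> y j" using cJ n2' by (simp add: n_def)
      also have "\<dots> = Y" unfolding Y_def using I(1) j by (simp add: sum_diff1)
      finally have "(\<Sum>i\<in>I-{j}. z i \<bullet> k i) + (\<Sum>i\<in>I-{j}. z i) \<bullet> w \<le> Y"
        by (simp add: sum.distrib inner_sum_left)
      then show ?thesis using sz unfolding z_def by simp
    qed
    then have "(\<Sum>j\<in>I. \<Sum>i\<in>I-{j}. (r i + (1/n) *\<^sub>R r j) \<bullet> k i) \<le> (\<Sum>j\<in>I. Y)"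
      by (rule sum_mono)
    also have "\<dots> = (n + 1) * Y" using cI by (simp add: n_def)
    finally have S1: "(\<Sum>j\<in>I. \<Sum>i\<in>I-{j}. (r i + (1/n) *\<^sub>R r j) \<bullet> k i) \<le> (n + 1) * Y" .
    have inner: "(\<Sum>i\<in>I-{j}. (r i + (1/n) *\<^sub>R r j) \<bullet> k i)
        = A + (1/n) * (r j \<bullet> (\<Sum>i\<in>I. k i)) - (1 + 1/n) * (r j \<bullet> k j)" if j: "j \<in> I" for j
    proof -
      have "(\<Sum>i\<in>I-{j}. (r i + (1/n) *\<^sub>R r j) \<bullet> k i)
          = (\<Sum>i\<in>I. (r i + (1/n) *\<^sub>R r j) \<bullet> k i) - (r j + (1/n) *\<^sub>R r j) \<bullet> k j"
        using I(1) j by (simp add: sum_diff1)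
      also have "(\<Sum>i\<in>I. (r i + (1/n) *\<^sub>R r j) \<bullet> k i) = A + (1/n) * (r j \<bullet> (\<Sum>i\<in>I. k i))"
        unfolding A_def by (simp add: inner_add_left sum.distrib inner_sum_right sum_distrib_left)
      finally show ?thesis by (simp add: inner_add_left algebra_simps)
    qed
    have "(\<Sum>j\<in>I. \<Sum>i\<in>I-{j}. (r i + (1/n) *\<^sub>R r j) \<bullet> k i)
        = (\<Sum>j\<in>I. A + (1/n) * (r j \<bullet> (\<Sum>i\<in>I. k i)) - (1 + 1/n) * (r j \<bullet> k j))"
      using inner by (rule sum.cong[OF refl])
    also have "\<dots> = (n + 1) * A + (1/n) * ((\<Sum>j\<in>I. r j) \<bullet> (\<Sum>i\<in>I. k i)) - (1 + 1/n) * A"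
      using cI unfolding A_def
      by (simp add: sum_subtractf sum.distrib sum_distrib_left inner_sum_left n_def, simp add: algebra_simps)
    also have "\<dots> = (n - 1/n) * A" using sumr by (simp add: algebra_simps)
    finally have "(n - 1/n) * A \<le> (n + 1) * Y" using S1 by simp
    then have "(n + 1) * ((n - 1) / n * A) \<le> (n + 1) * Y"
      using n2' by (simp add: field_simps)
    then have h: "(n - 1) / n * A \<le> Y" using n2'
      by (subst (asm) mult_le_cancel_left_pos) auto
    have "A = lam * ((n - 1) / n * A)" using n2' by (simp add: lam_def field_simps)
    also have "\<dots> \<le> lam * Y" using h lam0 by (intro mult_left_mono) auto
    finally show ?thesis .
  qed
  have "A = (\<Sum>i\<in>I. r i \<bullet> r i) + lam * Y"
  proof -
    have "r i \<bullet> k i = r i \<bullet> r i + r i \<bullet> x + lam * (r i \<bullet> y i)" for i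
      unfolding r_def by (simp add: inner_diff_right inner_add_right algebra_simps)
    then have "A = (\<Sum>i\<in>I. r i \<bullet> r i) + (\<Sum>i\<in>I. r i) \<bullet> x + lam * Y"
      unfolding A_def Y_def by (simp add: sum.distrib sum_distrib_left inner_sum_left)
    then show ?thesis using sumr by simp
  qed
  with key have "(\<Sum>i\<in>I. r i \<bullet> r i) \<le> 0" by simp
  then have "\<forall>i\<in>I. r i \<bullet> r i = 0"
  proof -
    have "(\<Sum>i\<in>I. r i \<bullet> r i) = 0"
      using \<open>(\<Sum>i\<in>I. r i \<bullet> r i) \<le> 0\<close> by (meson antisym inner_ge_zero sum_nonneg)
    then show ?thesis using I(1) by (subst (asm) sum_nonneg_eq_0_iff) auto
  qed
  then have "\<forall>i\<in>I. k i = x + lam *\<^sub>R y i" unfolding r_def by (metis inner_eq_zero_iff eq_iff_diff_eq_0 diff_diff_eq)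
  then show ?thesis using yL unfolding lam_def n_def by blast
qed

theorem corollary5p2:
  fixes K L :: "'a::euclidean_space set"
  assumes "DIM('a) \<ge> 2"
    and "compact K" and "convex K" and "compact L" and "convex L"
    and "\<And>u. norm u = 1 \<Longrightarrow> \<exists>w. (\<lambda>x. x + w) ` proj_perp u K \<subseteq> proj_perp u L"
  shows "measure lebesgue K \<le> (real DIM('a) / (real DIM('a) - 1)) ^ DIM('a) * measure lebesgue L"
proof -
  define lam where "lam = real DIM('a) / (real DIM('a) - 1)"
  have lam0: "lam > 0" using assms(1) unfolding lam_def by (simp add: field_simps)
  have H: "\<And>u. norm u = 1 \<Longrightarrow> \<exists>w. \<forall>k\<in>K. \<exists>y\<in>L. \<forall>z. z \<bullet> u = 0 \<longrightarrow> z \<bullet> k + z \<bullet> w = z \<bullet> y"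
    using hyp_cons assms(6) by blast
  show ?thesis
  proof (cases "K = {}")
    case True
    then show ?thesis using lam0 unfolding lam_def[symmetric] by simp
  next
    case False
    have Lne: "L \<noteq> {}"
    proof
      assume "L = {}"
      obtain b :: 'a where "b \<in> Basis" using nonempty_Basis by blast
      then obtain w where "(\<lambda>x. x + w) ` proj_perp b K \<subseteq> proj_perp b L"
        using assms(6) norm_Basis by blast
      then show False using False \<open>L = {}\<close> unfolding proj_perp_def by auto
    qed
    define A where "A k = (\<lambda>y. k - lam *\<^sub>R y) ` L" for k
    define F where "F = A ` K"
    have cA: "compact (A k)" for k unfolding A_def using assms(4)
      by (intro compact_continuous_image) (auto intro!: continuous_intros)
    have cvA: "convex (A k)" for k unfolding A_def
      using convex_affinity[OF assms(5), of k "-lam"] by simp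
    have small: "\<Inter>G \<noteq> {}" if G: "G \<subseteq> F" "finite G" "G \<noteq> {}" "card G \<le> DIM('a) + 1" for G
    proof -
      have "\<forall>g\<in>G. \<exists>k\<in>K. g = A k" using G(1) unfolding F_def by blast
      then obtain kk where kk: "\<And>g. g \<in> G \<Longrightarrow> kk g \<in> K \<and> g = A (kk g)" by metis
      obtain x where x: "\<forall>g\<in>G. \<exists>y\<in>L. kk g = x + lam *\<^sub>R y"
        using core[OF assms(1) assms(4,5) Lne H G(2,3,4), of kk] kk unfolding lam_def by blast
      have "x \<in> \<Inter>G"
      proof
        fix g assume "g \<in> G"
        then obtain y where "y \<in> L" "kk g = x + lam *\<^sub>R y" using x by blast
        moreover have "g = A (kk g)" using kk \<open>g \<in> G\<close> by blast
        ultimately show "x \<in> g" unfolding A_def by (auto intro!: image_eqI[of _ _ y])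
      qed
      then show ?thesis by blast
    qed
    have "\<Inter>F \<noteq> {}"
    proof (rule compact_fip_Heine_Borel)
      show "compact T" if "T \<in> F" for T using that cA unfolding F_def by blast
    next
      fix G assume G: "finite G" "G \<subseteq> F"
      show "\<Inter>G \<noteq> {}"
      proof (cases "G = {}")
        case True then show ?thesis by simp
      next
        case Gne: False
        show ?thesis
        proof (cases "card G \<le> DIM('a) + 1")
          case True then show ?thesis using small G Gne by blast
        next
          case False
          show ?thesis
          proof (rule Helly)
            show "DIM('a) + 1 \<le> card G" using False by simp
            show "\<forall>s\<in>G. convex s" using G(2) cvA unfolding F_def by blast
            fix t assume t: "t \<subseteq> G" "card t = DIM('a) + 1"
            then have "finite t" "t \<noteq> {}" by (auto intro: card_ge_0_finite)
            then show "\<Inter>t \<noteq> {}" using small t G(2) by auto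
          qed
        qed
      qed
    qed
    then obtain x0 where x0: "x0 \<in> \<Inter>F" by blast
    have sub: "K \<subseteq> (\<lambda>y. lam *\<^sub>R y + x0) ` L"
    proof
      fix k assume "k \<in> K"
      then have "x0 \<in> A k" using x0 unfolding F_def by blast
      then obtain y where "y \<in> L" "x0 = k - lam *\<^sub>R y" unfolding A_def by blast
      then show "k \<in> (\<lambda>y. lam *\<^sub>R y + x0) ` L" by (auto intro!: image_eqI[of _ _ y])
    qed
    have cim: "compact ((\<lambda>y. lam *\<^sub>R y + x0) ` L)" using assms(4)
      by (intro compact_continuous_image) (auto intro!: continuous_intros)
    have "measure lebesgue K \<le> measure lebesgue ((\<lambda>y. lam *\<^sub>R y + x0) ` L)"
      using sub lmeasurable_compact[OF assms(2)] lmeasurable_compact[OF cim]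
      by (intro measure_mono_fmeasurable) auto
    also have "\<dots> = \<bar>lam\<bar> ^ DIM('a) * measure lebesgue L"
      by (rule measure_lebesgue_affine)
    finally show ?thesis using lam0 unfolding lam_def by simp
  qed
qed

end
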